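(* Let $L^\bullet$ be a generalized operator algebra with the block-matrix property and let $$\mathfrak A_{\mathfrak P}:0\to H(g^0;P_0)\xrightarrow{A_0}H(g^1;P_1)\xrightarrow{A_1}H(g^2;P_2)\to\cdots$$ be a complex with $A_j\in T^0((g^j,g^{j+1});P_j,P_{j+1})$, $j\ge0$. Let $\mathfrak A^\wedge_{\mathfrak P}$ be its lift. Then $$\ker A_{[j]}=\ker\big(A_j:H(g^j,P_j)\to H(g^{j+1},P_{j+1})\big)\oplus\ker P_{j-1}\oplus\mathrm{im}\,P_{j-2}\oplus\ker P_{j-3}\oplus\cdots,$$ $$\mathrm{im}\,A_{[j]}=\mathrm{im}\big(A_j:H(g^j,P_j)\to H(g^{j+1},P_{j+1})\big)\oplus\ker P_j\oplus\mathrm{im}\,P_{j-1}\oplus\ker P_{j-2}\oplus\cdots,$$ (images and kernels of $P_k$ taken in $H(g^k)$); consequently $\mathcal H_j(\mathfrak A_{\mathfrak P})\cong\mathcal H_j(\mathfrak A^\wedge_{\mathfrak P})$ for all $j\ge0$, and $\mathfrak A_{\mathfrak P}$ is Fredholm (resp. exact) iff $\mathfrak A^\wedge_{\mathfrak P}$ is Fredholm (resp. exact).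
   Context: Generalized operator algebra $L^\bullet$: weights $g\in G$ with Hilbert spaces $H(g)$, spaces $L^{-\infty}((g^0,g^1))\subset L^0((g^0,g^1))\subset\mathcal L(H(g^0),H(g^1))$ closed under composition and adjoints, containing identities, smoothing operators compact. Block-matrix property: there is an associative map $(g^0,g^1)\mapsto g^0\oplus g^1$ on $G$ with $H(g^0\oplus g^1)=H(g^0)\oplus H(g^1)$ such that $L^\mu$ of pairs of direct sums is identified with block matrices whose entries lie in $L^\mu$ of the corresponding pairs. For projections $P_j\in L^0((g^j,g^j))$, $H(g,P):=P(H(g))$ and $T^\mu((g^0,g^1);P_0,P_1)=\{A\in L^\mu((g^0,g^1)):(1-P_1)A=0,\ A(1-P_0)=0\}$. Lift: $g^{[j]}:=g^j\oplus g^{j-1}\oplus\cdots\oplus g^0$ and $A_{[j]}\in L^0((g^{[j]},g^{[j+1]}))$, $A_{[j]}(u_j,u_{j-1},\dots,u_0)=(A_ju_j,(1-P_j)u_j,P_{j-1}u_{j-1},(1-P_{j-2})u_{j-2},P_{j-3}u_{j-3},\dots)$; then $A_{[j+1]}A_{[j]}=0$ and $\mathfrak A^\wedge_{\mathfrak P}:0\to H(g^{[0]})\xrightarrow{A_{[0]}}H(g^{[1]})\xrightarrow{A_{[1]}}\cdots$ is the lift. $\mathcal H_j$ denotes cohomology $\ker/\mathrm{im}$. *)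

theory Defs
  imports "HOL-Analysis.Analysis" "HOL-Library.Function_Algebras"
begin

text \<open>Elements of a finite direct sum H(g^k) + ... + H(g^0) are modelled as
  functions nat => 'v whose k-th component lies in H(g^k), zero outside the range.\<close>

instantiation "fun" :: (type, real_vector) real_vector
begin
definition scaleR_fun :: "real \<Rightarrow> ('a \<Rightarrow> 'b) \<Rightarrow> 'a \<Rightarrow> 'b"
  where "scaleR_fun c f = (\<lambda>x. c *\<^sub>R f x)"
instance
  by standard (auto simp: scaleR_fun_def fun_eq_iff algebra_simps scaleR_add_right scaleR_add_left)
end

definition cker :: "(nat \<Rightarrow> 'a set) \<Rightarrow> (nat \<Rightarrow> 'a \<Rightarrow> 'a::real_vector) \<Rightarrow> nat \<Rightarrow> 'a set"
  where "cker W D j = {x \<in> W j. D j x = 0}"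

definition cim :: "(nat \<Rightarrow> 'a set) \<Rightarrow> (nat \<Rightarrow> 'a \<Rightarrow> 'a::real_vector) \<Rightarrow> nat \<Rightarrow> 'a set"
  where "cim W D j = (if j = 0 then {0} else D (j - 1) ` W (j - 1))"

text \<open>H_j(W,D) \<cong> H_j(W',D'): a linear map between the kernels inducing a bijection
  of the quotients ker/im.\<close>
definition cohom_iso ::
  "(nat \<Rightarrow> 'a set) \<Rightarrow> (nat \<Rightarrow> 'a \<Rightarrow> 'a::real_vector) \<Rightarrow>
   (nat \<Rightarrow> 'b set) \<Rightarrow> (nat \<Rightarrow> 'b \<Rightarrow> 'b::real_vector) \<Rightarrow> nat \<Rightarrow> bool"
  where "cohom_iso W D W' D' j \<longleftrightarrow>
    (\<exists>f. linear f \<and> f ` cker W D j \<subseteq> cker W' D' j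
       \<and> (\<forall>x\<in>cker W D j. f x \<in> cim W' D' j \<longleftrightarrow> x \<in> cim W D j)
       \<and> (\<forall>y\<in>cker W' D' j. \<exists>x\<in>cker W D j. y - f x \<in> cim W' D' j))"

definition cohom_findim :: "(nat \<Rightarrow> 'a set) \<Rightarrow> (nat \<Rightarrow> 'a \<Rightarrow> 'a::real_vector) \<Rightarrow> nat \<Rightarrow> bool"
  where "cohom_findim W D j \<longleftrightarrow>
    (\<exists>S. finite S \<and> S \<subseteq> cker W D j \<and> cker W D j \<subseteq> span (S \<union> cim W D j))"

definition fredholm_complex :: "(nat \<Rightarrow> 'a set) \<Rightarrow> (nat \<Rightarrow> 'a \<Rightarrow> 'a::real_vector) \<Rightarrow> bool"
  where "fredholm_complex W D \<longleftrightarrow> (\<forall>j. cohom_findim W D j)"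

definition exact_complex :: "(nat \<Rightarrow> 'a set) \<Rightarrow> (nat \<Rightarrow> 'a \<Rightarrow> 'a::real_vector) \<Rightarrow> bool"
  where "exact_complex W D \<longleftrightarrow> (\<forall>j. cker W D j = cim W D j)"

text \<open>H(g^j,P_j) = P_j(H(g^j)).\<close>
definition Hproj :: "(nat \<Rightarrow> 'v set) \<Rightarrow> (nat \<Rightarrow> 'v \<Rightarrow> 'v) \<Rightarrow> nat \<Rightarrow> 'v set"
  where "Hproj V P j = P j ` V j"

definition kerP :: "(nat \<Rightarrow> 'v set) \<Rightarrow> (nat \<Rightarrow> 'v \<Rightarrow> 'v::zero) \<Rightarrow> nat \<Rightarrow> 'v set"
  where "kerP V P k = {x \<in> V k. P k x = 0}"

definition dsum :: "(nat \<Rightarrow> 'v set) \<Rightarrow> nat \<Rightarrow> (nat \<Rightarrow> 'v::zero) set"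
  where "dsum S n = {u. (\<forall>k\<le>n. u k \<in> S k) \<and> (\<forall>k>n. u k = 0)}"

text \<open>H(g^[j]) = H(g^j) + H(g^(j-1)) + ... + H(g^0).\<close>
definition lift_space :: "(nat \<Rightarrow> 'v set) \<Rightarrow> nat \<Rightarrow> (nat \<Rightarrow> 'v::zero) set"
  where "lift_space V j = dsum V j"

text \<open>A_[j](u_j,...,u_0) = (A_j u_j, (1-P_j)u_j, P_(j-1)u_(j-1), (1-P_(j-2))u_(j-2), ...),
  the component belonging to H(g^k) being (1-P_k)u_k if j-k is even and P_k u_k if odd.\<close>
definition lift_op :: "(nat \<Rightarrow> 'v \<Rightarrow> 'v) \<Rightarrow> (nat \<Rightarrow> 'v \<Rightarrow> 'v) \<Rightarrow> nat
    \<Rightarrow> (nat \<Rightarrow> 'v) \<Rightarrow> (nat \<Rightarrow> 'v::real_vector)"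
  where "lift_op A P j u = (\<lambda>k. if k = Suc j then A j (u j)
            else if k \<le> j then (if even (j - k) then u k - P k (u k) else P k (u k))
            else 0)"

end

theory Submission
  imports Defs
begin

locale LS =
  fixes V :: "nat \<Rightarrow> 'v::real_vector set"
    and P A :: "nat \<Rightarrow> 'v \<Rightarrow> 'v"
  assumes V_sub: "\<And>j. subspace (V j)"
    and P_lin: "\<And>j. linear (P j)"
    and P_maps: "\<And>j x. x \<in> V j \<Longrightarrow> P j x \<in> V j"
    and P_idem: "\<And>j x. x \<in> V j \<Longrightarrow> P j (P j x) = P j x"
    and A_lin: "\<And>j. linear (A j)"
    and A_maps: "\<And>j x. x \<in> V j \<Longrightarrow> A j x \<in> V (Suc j)"
    and A_T1: "\<And>j x. x \<in> V j \<Longrightarrow> A j x - P (Suc j) (A j x) = 0"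
    and A_T2: "\<And>j x. x \<in> V j \<Longrightarrow> A j (x - P j x) = 0"
    and cplx: "\<And>j x. x \<in> Hproj V P j \<Longrightarrow> A (Suc j) (A j x) = 0"
begin

definition "Kset j k = (if k = j then {x \<in> Hproj V P j. A j x = 0}
                     else if odd (j - k) then kerP V P k else Hproj V P k)"
definition "Iset j k = (if k = Suc j then A j ` Hproj V P j
                     else if even (j - k) then kerP V P k else Hproj V P k)"

lemma Pz[simp]: "P j 0 = 0" using P_lin linear_0 by blast
lemma Az[simp]: "A j 0 = 0" using A_lin linear_0 by blast
lemma V0[simp]: "0 \<in> V j" using V_sub subspace_0 by blast
lemma H0[simp]: "0 \<in> Hproj V P j" unfolding Hproj_def by (metis Pz V0 image_eqI)
lemma K0[simp]: "0 \<in> kerP V P j" unfolding kerP_def by simp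
lemma HV: "x \<in> Hproj V P j \<Longrightarrow> x \<in> V j \<and> P j x = x"
  unfolding Hproj_def using P_maps P_idem by auto
lemma Hchar: "x \<in> V j \<Longrightarrow> P j x = x \<Longrightarrow> x \<in> Hproj V P j"
  unfolding Hproj_def by (metis image_eqI)
lemma Pdiff: "P j (x - y) = P j x - P j y" using P_lin linear_diff by blast
lemma Padd: "P j (x + y) = P j x + P j y" using P_lin linear_add by blast
lemma Adiff: "A j (x - y) = A j x - A j y" using A_lin linear_diff by blast
lemma Aadd: "A j (x + y) = A j x + A j y" using A_lin linear_add by blast
lemma Vdiff: "x \<in> V j \<Longrightarrow> y \<in> V j \<Longrightarrow> x - y \<in> V j" using V_sub subspace_diff by blast
lemma Vadd: "x \<in> V j \<Longrightarrow> y \<in> V j \<Longrightarrow> x + y \<in> V j" using V_sub subspace_add by blast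
lemma AP: "x \<in> V j \<Longrightarrow> A j (P j x) = A j x" using A_T2 Adiff by fastforce

lemma ker_eq: "{u \<in> lift_space V j. lift_op A P j u = 0} = dsum (Kset j) j"
proof (rule set_eqI, rule iffI)
  fix u assume "u \<in> {u \<in> lift_space V j. lift_op A P j u = 0}"
  then have U: "\<And>k. k \<le> j \<Longrightarrow> u k \<in> V k" "\<And>k. k > j \<Longrightarrow> u k = 0"
    and L: "\<And>k. lift_op A P j u k = 0"
    by (auto simp: lift_space_def dsum_def fun_eq_iff)
  have "u k \<in> Kset j k" if k: "k \<le> j" for k
  proof (cases "k = j")
    case True
    have "u j - P j (u j) = 0" using L[of j] by (simp add: lift_op_def)
    moreover have "A j (u j) = 0" using L[of "Suc j"] by (simp add: lift_op_def)
    ultimately show ?thesis using True U(1)[of j] Hchar by (auto simp: Kset_def)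
  next
    case False
    show ?thesis
    proof (cases "odd (j - k)")
      case True
      then have "P k (u k) = 0" using L[of k] k by (simp add: lift_op_def)
      then show ?thesis using True False U k by (auto simp: Kset_def kerP_def)
    next
      case odd: False
      then have "u k - P k (u k) = 0" using L[of k] k by (simp add: lift_op_def)
      then show ?thesis using odd False U k Hchar by (auto simp: Kset_def)
    qed
  qed
  then show "u \<in> dsum (Kset j) j" using U by (auto simp: dsum_def)
next
  fix u assume "u \<in> dsum (Kset j) j"
  then have U: "\<And>k. k \<le> j \<Longrightarrow> u k \<in> Kset j k" "\<And>k. k > j \<Longrightarrow> u k = 0"
    by (auto simp: dsum_def)
  have UV: "u k \<in> V k" if "k \<le> j" for k
    using U(1)[OF that] HV by (auto simp: Kset_def kerP_def split: if_splits)
  have "lift_op A P j u k = 0" for k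
  proof -
    consider "k = Suc j" | "k = j" | "k < j" | "k > Suc j" by linarith
    then show ?thesis
    proof cases
      case 1 then show ?thesis using U(1)[of j] by (simp add: lift_op_def Kset_def)
    next
      case 2 then show ?thesis using U(1)[of j] HV by (simp add: lift_op_def Kset_def)
    next
      case 3 then show ?thesis using U(1)[of k] HV
        by (auto simp: lift_op_def Kset_def kerP_def)
    next
      case 4 then show ?thesis by (simp add: lift_op_def)
    qed
  qed
  then show "u \<in> {u \<in> lift_space V j. lift_op A P j u = 0}"
    using UV U(2) by (auto simp: lift_space_def dsum_def fun_eq_iff)
qed

lemma im_eq: "lift_op A P j ` lift_space V j = dsum (Iset j) (Suc j)"
proof (rule set_eqI, rule iffI)
  fix w assume "w \<in> lift_op A P j ` lift_space V j"
  then obtain u where w: "w = lift_op A P j u" and u: "u \<in> lift_space V j" by blast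
  then have U: "\<And>k. k \<le> j \<Longrightarrow> u k \<in> V k" "\<And>k. k > j \<Longrightarrow> u k = 0"
    by (auto simp: lift_space_def dsum_def)
  have "w k \<in> Iset j k" if k: "k \<le> Suc j" for k
  proof -
    consider "k = Suc j" | "k \<le> j" "even (j - k)" | "k \<le> j" "odd (j - k)" using k by linarith
    then show ?thesis
    proof cases
      case 1
      have "A j (u j) = A j (P j (u j))" using AP U(1)[of j] by simp
      moreover have "P j (u j) \<in> Hproj V P j" using U(1)[of j] by (auto simp: Hproj_def)
      ultimately show ?thesis using 1 by (auto simp: w lift_op_def Iset_def)
    next
      case 2
      have "u k - P k (u k) \<in> kerP V P k" using U(1)[OF 2(1)] P_maps P_idem Vdiff
        by (auto simp: kerP_def Pdiff)
      then show ?thesis using 2 by (auto simp: w lift_op_def Iset_def)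
    next
      case 3
      have "P k (u k) \<in> Hproj V P k" using U(1)[OF 3(1)] by (auto simp: Hproj_def)
      then show ?thesis using 3 by (auto simp: w lift_op_def Iset_def)
    qed
  qed
  moreover have "w k = 0" if "k > Suc j" for k using that by (simp add: w lift_op_def)
  ultimately show "w \<in> dsum (Iset j) (Suc j)" by (auto simp: dsum_def)
next
  fix w assume "w \<in> dsum (Iset j) (Suc j)"
  then have W: "\<And>k. k \<le> Suc j \<Longrightarrow> w k \<in> Iset j k" "\<And>k. k > Suc j \<Longrightarrow> w k = 0"
    by (auto simp: dsum_def)
  obtain y where y: "y \<in> V j" "w (Suc j) = A j (P j y)"
    using W(1)[of "Suc j"] by (auto simp: Iset_def Hproj_def)
  have wj: "w j \<in> V j" "P j (w j) = 0" using W(1)[of j] by (auto simp: Iset_def kerP_def)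
  define u where "u = (\<lambda>k. if k = j then P j y + w j else if k < j then w k else 0)"
  have WV: "w k \<in> V k" if "k \<le> j" for k
    using W(1)[of k] that HV by (auto simp: Iset_def kerP_def split: if_splits)
  have "u \<in> lift_space V j"
    using WV P_maps y Vadd by (auto simp: u_def lift_space_def dsum_def)
  moreover have "lift_op A P j u = w"
  proof
    fix k
    consider "k = Suc j" | "k = j" | "k < j" | "k > Suc j" by linarith
    then show "lift_op A P j u k = w k"
    proof cases
      case 1
      have "A j (w j) = 0" using A_T2[OF wj(1)] wj(2) by simp
      then show ?thesis using 1 y by (simp add: lift_op_def u_def Aadd)
    next
      case 2 then show ?thesis using y wj P_idem by (simp add: lift_op_def u_def Padd)
    next
      case 3 then show ?thesis using W(1)[of k] HV
        by (auto simp: lift_op_def u_def Iset_def kerP_def)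
    next
      case 4 then show ?thesis using W(2) by (simp add: lift_op_def)
    qed
  qed
  ultimately show "w \<in> lift_op A P j ` lift_space V j" by blast
qed


definition "fj j x = (\<lambda>k. if k = j then x else (0::'v))"

lemma fj_lin: "linear (fj j)"
  by (rule linearI) (auto simp: fj_def fun_eq_iff scaleR_fun_def plus_fun_def)
lemma gj_lin: "linear (\<lambda>u::nat\<Rightarrow>'v. u j)"
  by (rule linearI) (auto simp: scaleR_fun_def plus_fun_def)

lemma KI: "j > 0 \<Longrightarrow> k < j \<Longrightarrow> Kset j k = Iset (j - 1) k"
proof -
  assume a: "j > 0" "k < j"
  have "odd (j-k) \<longleftrightarrow> even (j-1-k)" using a by presburger
  then show ?thesis using a unfolding Kset_def Iset_def by auto
qed

lemma cker': "cker (lift_space V) (lift_op A P) j = dsum (Kset j) j"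
  using ker_eq by (simp add: cker_def)
lemma cim': "cim (lift_space V) (lift_op A P) j = (if j = 0 then {0} else dsum (Iset (j-1)) j)"
  using im_eq[of "j-1"] by (simp add: cim_def)

lemma cim_sub: "cim (Hproj V P) A j \<subseteq> cker (Hproj V P) A j"
proof (cases "j = 0")
  case True then show ?thesis by (simp add: cim_def cker_def)
next
  case False
  then obtain i where j: "j = Suc i" by (cases j) auto
  show ?thesis
  proof
    fix x assume "x \<in> cim (Hproj V P) A j"
    then obtain y where y: "y \<in> Hproj V P i" "x = A i y" by (auto simp: cim_def j)
    have "x \<in> V j" "P j x = x" using y HV A_maps A_T1 by (auto simp: j)
    then show "x \<in> cker (Hproj V P) A j" using cplx y Hchar by (auto simp: cker_def j)
  qed
qed

lemma decomp:
  assumes y: "y \<in> cker (lift_space V) (lift_op A P) j"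
  shows "y j \<in> cker (Hproj V P) A j" "y - fj j (y j) \<in> cim (lift_space V) (lift_op A P) j"
proof -
  from y have Y: "\<And>k. k \<le> j \<Longrightarrow> y k \<in> Kset j k" "\<And>k. k > j \<Longrightarrow> y k = 0"
    unfolding cker' by (auto simp: dsum_def)
  show "y j \<in> cker (Hproj V P) A j" using Y(1)[of j] by (simp add: Kset_def cker_def)
  show "y - fj j (y j) \<in> cim (lift_space V) (lift_op A P) j"
  proof (cases "j = 0")
    case True then show ?thesis using Y by (auto simp: cim' fj_def fun_eq_iff)
  next
    case False
    have "0 \<in> A (j - 1) ` Hproj V P (j - 1)" by (metis Az H0 image_eqI)
    then have "(y - fj j (y j)) j \<in> Iset (j-1) j" using False by (simp add: Iset_def fj_def)
    moreover have "(y - fj j (y j)) k \<in> Iset (j-1) k" if "k < j" for k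
      using Y(1)[of k] KI[of j k] that False by (simp add: fj_def)
    ultimately have "\<forall>k\<le>j. (y - fj j (y j)) k \<in> Iset (j-1) k" using le_neq_implies_less by blast
    moreover have "\<forall>k>j. (y - fj j (y j)) k = 0" using Y(2) by (simp add: fj_def)
    ultimately show ?thesis unfolding cim' using False by (simp add: dsum_def)
  qed
qed

lemma fcim: "fj j ` cim (Hproj V P) A j \<subseteq> cim (lift_space V) (lift_op A P) j"
proof (cases "j = 0")
  case True then show ?thesis by (auto simp: cim' cim_def fj_def fun_eq_iff)
next
  case False then show ?thesis unfolding cim'
    by (auto simp: cim_def fj_def dsum_def Iset_def)
qed

lemma fcker: "fj j ` cker (Hproj V P) A j \<subseteq> cker (lift_space V) (lift_op A P) j"
  unfolding cker' by (auto simp: fj_def dsum_def Kset_def cker_def)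

lemma gcim: "u \<in> cim (lift_space V) (lift_op A P) j \<Longrightarrow> u j \<in> cim (Hproj V P) A j"
  unfolding cim' by (auto simp: cim_def dsum_def Iset_def split: if_splits)

lemma gf: "fj j x j = x" by (simp add: fj_def)

lemma iso: "cohom_iso (Hproj V P) A (lift_space V) (lift_op A P) j"
  unfolding cohom_iso_def
proof (intro exI[of _ "fj j"] conjI ballI)
  show "linear (fj j)" by (rule fj_lin)
  show "fj j ` cker (Hproj V P) A j \<subseteq> cker (lift_space V) (lift_op A P) j" by (rule fcker)
next
  fix x assume x: "x \<in> cker (Hproj V P) A j"
  show "fj j x \<in> cim (lift_space V) (lift_op A P) j \<longleftrightarrow> x \<in> cim (Hproj V P) A j"
  proof
    assume "fj j x \<in> cim (lift_space V) (lift_op A P) j"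
    from gcim[OF this] show "x \<in> cim (Hproj V P) A j" by (simp add: gf)
  next
    assume "x \<in> cim (Hproj V P) A j"
    then show "fj j x \<in> cim (lift_space V) (lift_op A P) j" using fcim[of j] by blast
  qed
next
  fix y assume y: "y \<in> cker (lift_space V) (lift_op A P) j"
  then show "\<exists>x\<in>cker (Hproj V P) A j. y - fj j x \<in> cim (lift_space V) (lift_op A P) j"
    using decomp by blast
qed

lemma findim: "cohom_findim (Hproj V P) A j \<longleftrightarrow> cohom_findim (lift_space V) (lift_op A P) j"
proof
  assume "cohom_findim (Hproj V P) A j"
  then obtain S where S: "finite S" "S \<subseteq> cker (Hproj V P) A j"
     "cker (Hproj V P) A j \<subseteq> span (S \<union> cim (Hproj V P) A j)"
    by (auto simp: cohom_findim_def)
  have "y \<in> span (fj j ` S \<union> cim (lift_space V) (lift_op A P) j)"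
    if y: "y \<in> cker (lift_space V) (lift_op A P) j" for y
  proof -
    have "fj j (y j) \<in> fj j ` span (S \<union> cim (Hproj V P) A j)"
      using decomp(1)[OF y] S(3) by blast
    also have "\<dots> = span (fj j ` S \<union> fj j ` cim (Hproj V P) A j)"
      using span_linear_image[OF fj_lin, of j "S \<union> cim (Hproj V P) A j"] by (simp add: image_Un)
    also have "\<dots> \<subseteq> span (fj j ` S \<union> cim (lift_space V) (lift_op A P) j)"
      using fcim by (intro span_mono) blast
    finally have 1: "fj j (y j) \<in> span (fj j ` S \<union> cim (lift_space V) (lift_op A P) j)" .
    have 2: "y - fj j (y j) \<in> span (fj j ` S \<union> cim (lift_space V) (lift_op A P) j)"
      using decomp(2)[OF y] by (simp add: span_base)
    show ?thesis using span_add[OF 2 1] by simp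
  qed
  then show "cohom_findim (lift_space V) (lift_op A P) j"
    unfolding cohom_findim_def using S(1,2) fcker
    by (intro exI[of _ "fj j ` S"]) blast
next
  assume "cohom_findim (lift_space V) (lift_op A P) j"
  then obtain S where S: "finite S" "S \<subseteq> cker (lift_space V) (lift_op A P) j"
     "cker (lift_space V) (lift_op A P) j \<subseteq> span (S \<union> cim (lift_space V) (lift_op A P) j)"
    by (auto simp: cohom_findim_def)
  let ?g = "\<lambda>u::nat\<Rightarrow>'v. u j"
  have "x \<in> span (?g ` S \<union> cim (Hproj V P) A j)"
    if x: "x \<in> cker (Hproj V P) A j" for x
  proof -
    have "fj j x \<in> span (S \<union> cim (lift_space V) (lift_op A P) j)" using fcker x S(3) by blast
    then have "?g (fj j x) \<in> ?g ` span (S \<union> cim (lift_space V) (lift_op A P) j)" by blast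
    also have "\<dots> = span (?g ` S \<union> ?g ` cim (lift_space V) (lift_op A P) j)"
      using span_linear_image[OF gj_lin, of j "S \<union> cim (lift_space V) (lift_op A P) j"] by (simp add: image_Un)
    also have "\<dots> \<subseteq> span (?g ` S \<union> cim (Hproj V P) A j)"
      using gcim by (intro span_mono) blast
    finally show ?thesis by (simp add: gf)
  qed
  moreover have "?g ` S \<subseteq> cker (Hproj V P) A j" using S(2) decomp(1) by blast
  ultimately show "cohom_findim (Hproj V P) A j"
    unfolding cohom_findim_def using S(1) by (intro exI[of _ "?g ` S"]) blast
qed

lemma cim'_sub: "cim (lift_space V) (lift_op A P) j \<subseteq> cker (lift_space V) (lift_op A P) j"
proof
  fix u assume u: "u \<in> cim (lift_space V) (lift_op A P) j"
  show "u \<in> cker (lift_space V) (lift_op A P) j"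
  proof (cases "j = 0")
    case True then show ?thesis using u unfolding cim' cker'
      by (simp add: dsum_def Kset_def)
  next
    case False
    have U: "\<And>k. k \<le> j \<Longrightarrow> u k \<in> Iset (j-1) k" "\<And>k. k > j \<Longrightarrow> u k = 0"
      using u False unfolding cim' by (auto simp: dsum_def)
    have "u j \<in> cim (Hproj V P) A j" using U(1)[of j] False by (simp add: Iset_def cim_def)
    then have "u j \<in> Kset j j" using cim_sub[of j] by (auto simp: Kset_def cker_def)
    moreover have "u k \<in> Kset j k" if "k < j" for k using U(1)[of k] KI[of j k] that False by simp
    ultimately have "\<forall>k\<le>j. u k \<in> Kset j k" using le_neq_implies_less by blast
    then show ?thesis unfolding cker' using U(2) by (simp add: dsum_def)
  qed
qed

lemma exact_j: "cker (Hproj V P) A j = cim (Hproj V P) A j \<longleftrightarrow>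
    cker (lift_space V) (lift_op A P) j = cim (lift_space V) (lift_op A P) j"
proof
  assume e: "cker (Hproj V P) A j = cim (Hproj V P) A j"
  have "cker (lift_space V) (lift_op A P) j \<subseteq> cim (lift_space V) (lift_op A P) j"
  proof
    fix y assume y: "y \<in> cker (lift_space V) (lift_op A P) j"
    have Y: "\<And>k. k \<le> j \<Longrightarrow> y k \<in> Kset j k" "\<And>k. k > j \<Longrightarrow> y k = 0"
      using y unfolding cker' by (auto simp: dsum_def)
    have yj: "y j \<in> cim (Hproj V P) A j" using decomp(1)[OF y] e by simp
    show "y \<in> cim (lift_space V) (lift_op A P) j"
    proof (cases "j = 0")
      case True
      have "y k = 0" for k using yj Y(2)[of k] True by (cases k) (auto simp: cim_def)
      then have "y = 0" by (simp add: fun_eq_iff)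
      then show ?thesis using True by (simp add: cim')
    next
      case False
      have "y j \<in> Iset (j-1) j" using yj False by (simp add: Iset_def cim_def)
      moreover have "y k \<in> Iset (j-1) k" if "k < j" for k using Y(1)[of k] KI[of j k] that False by simp
      ultimately have "\<forall>k\<le>j. y k \<in> Iset (j-1) k" using le_neq_implies_less by blast
      then show ?thesis unfolding cim' using Y(2) False by (simp add: dsum_def)
    qed
  qed
  then show "cker (lift_space V) (lift_op A P) j = cim (lift_space V) (lift_op A P) j"
    using cim'_sub by blast
next
  assume e: "cker (lift_space V) (lift_op A P) j = cim (lift_space V) (lift_op A P) j"
  have "x \<in> cim (Hproj V P) A j" if "x \<in> cker (Hproj V P) A j" for x
  proof -
    have "fj j x \<in> cim (lift_space V) (lift_op A P) j" using fcker[of j] that e by blast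
    from gcim[OF this] show ?thesis by (simp add: gf)
  qed
  then show "cker (Hproj V P) A j = cim (Hproj V P) A j"
    using cim_sub[of j] by blast
qed
end
theorem mainTheorem13:
  fixes V :: "nat \<Rightarrow> 'v::real_vector set"
    and P A :: "nat \<Rightarrow> 'v \<Rightarrow> 'v"
  assumes V_sub: "\<And>j. subspace (V j)"
    and P_lin: "\<And>j. linear (P j)"
    and P_maps: "\<And>j x. x \<in> V j \<Longrightarrow> P j x \<in> V j"
    and P_idem: "\<And>j x. x \<in> V j \<Longrightarrow> P j (P j x) = P j x"
    and A_lin: "\<And>j. linear (A j)"
    and A_maps: "\<And>j x. x \<in> V j \<Longrightarrow> A j x \<in> V (Suc j)"
    and A_T1: "\<And>j x. x \<in> V j \<Longrightarrow> A j x - P (Suc j) (A j x) = 0"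
    and A_T2: "\<And>j x. x \<in> V j \<Longrightarrow> A j (x - P j x) = 0"
    and cplx: "\<And>j x. x \<in> Hproj V P j \<Longrightarrow> A (Suc j) (A j x) = 0"
  shows
    "(\<forall>j. {u \<in> lift_space V j. lift_op A P j u = 0} =
          dsum (\<lambda>k. if k = j then {x \<in> Hproj V P j. A j x = 0}
                     else if odd (j - k) then kerP V P k else Hproj V P k) j)
     \<and> (\<forall>j. lift_op A P j ` lift_space V j =
          dsum (\<lambda>k. if k = Suc j then A j ` Hproj V P j
                     else if even (j - k) then kerP V P k else Hproj V P k) (Suc j))
     \<and> (\<forall>j. cohom_iso (Hproj V P) A (lift_space V) (lift_op A P) j)
     \<and> (fredholm_complex (Hproj V P) A \<longleftrightarrow> fredholm_complex (lift_space V) (lift_op A P))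
     \<and> (exact_complex (Hproj V P) A \<longleftrightarrow> exact_complex (lift_space V) (lift_op A P))"
proof -
  interpret LS V P A using assms by (intro LS.intro) blast+
  show ?thesis
    using ker_eq im_eq iso findim exact_j
    unfolding Kset_def Iset_def fredholm_complex_def exact_complex_def by blast
qed

end
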